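(* For every integer $n\ge 0$, $$e(n+1)=\max\{\nu(n-i)-\nu(i): i=0,1,\dots,n\},\qquad -e(n+1)=\min\{\nu(n-i)-\nu(i): i=0,1,\dots,n\}.$$
   Context: The Stern polynomials $B_n(t)\in\mathbb{Z}[t]$, $n\ge 0$, are defined by $B_0(t)=0$, $B_1(t)=1$, $B_{2n}(t)=tB_n(t)$ and $B_{2n+1}(t)=B_n(t)+B_{n+1}(t)$ for $n\ge 1$. For $n\ge 1$, $e(n)=\deg_t B_n(t)$. For $n\ge 0$, $\nu(n)$ denotes the number of digits $1$ in the binary representation of $n$. *)

theory Defs
  imports "HOL-Computational_Algebra.Polynomial"
begin

function stern_poly :: "nat \<Rightarrow> int poly" where
  "stern_poly n =
     (if n = 0 then 0
      else if n = 1 then 1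
      else if even n then [:0, 1:] * stern_poly (n div 2)
      else stern_poly (n div 2) + stern_poly (n div 2 + 1))"
  by pat_completeness auto
termination
  by (relation "measure id") (auto elim: oddE)

text \<open>e(n) = degree of B_n (meaningful for n >= 1).\<close>
definition stern_e :: "nat \<Rightarrow> nat" where
  "stern_e n = degree (stern_poly n)"

fun nu :: "nat \<Rightarrow> nat" where
  "nu n = (if n = 0 then 0 else n mod 2 + nu (n div 2))"

end

theory Submission
  imports Defs
begin

declare stern_poly.simps[simp del] nu.simps[simp del]

lemma nu0: "nu 0 = 0" by (subst nu.simps) simp

lemma nu_even: "nu (2*a) = nu a"
  by (subst nu.simps) (auto simp: nu0)

lemma nu_odd: "nu (2*a+1) = nu a + 1"
  by (subst nu.simps) auto

lemma nu_odd': "nu (Suc (2*a)) = nu a + 1" using nu_odd by simp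

lemma sp_even: "m \<ge> 1 \<Longrightarrow> stern_poly (2*m) = [:0,1:] * stern_poly m"
  by (subst stern_poly.simps) auto

lemma sp_odd: "m \<ge> 1 \<Longrightarrow> stern_poly (2*m+1) = stern_poly m + stern_poly (m+1)"
  by (subst stern_poly.simps) auto

lemma sp0: "stern_poly 0 = 0" by (subst stern_poly.simps) simp
lemma sp1: "stern_poly 1 = 1" by (subst stern_poly.simps) simp
lemma sp1': "stern_poly (Suc 0) = 1" using sp1 by simp

definition nonneg :: "int poly \<Rightarrow> bool" where
  "nonneg p = (\<forall>k. coeff p k \<ge> 0)"

lemma lead_pos: "nonneg p \<Longrightarrow> p \<noteq> 0 \<Longrightarrow> lead_coeff p > 0"
  unfolding nonneg_def by (metis leading_coeff_0_iff order_le_less)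

lemma nonneg_add_ne: "nonneg p \<Longrightarrow> nonneg q \<Longrightarrow> p \<noteq> 0 \<Longrightarrow> p + q \<noteq> 0"
proof
  assume a: "nonneg p" "nonneg q" "p \<noteq> 0" "p + q = 0"
  have "coeff (p+q) (degree p) > 0" using lead_pos[OF a(1) a(3)] a(2)
    unfolding nonneg_def by (simp add: add_pos_nonneg)
  with a(4) show False by simp
qed

lemma degree_add_nonneg:
  assumes "nonneg p" "nonneg q"
  shows "degree (p + q) = max (degree p) (degree q)"
proof (rule antisym)
  show "degree (p + q) \<le> max (degree p) (degree q)" by (rule degree_add_le_max)
next
  have "degree p \<le> degree (p+q)"
  proof (cases "p = 0")
    case False
    have "coeff (p+q) (degree p) > 0" using lead_pos[OF assms(1) False] assms(2)
      unfolding nonneg_def by (simp add: add_pos_nonneg)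
    then show ?thesis by (intro le_degree) simp
  qed simp
  moreover have "degree q \<le> degree (p+q)"
  proof (cases "q = 0")
    case False
    have "coeff (p+q) (degree q) > 0" using lead_pos[OF assms(2) False] assms(1)
      unfolding nonneg_def by (simp add: add_nonneg_pos)
    then show ?thesis by (intro le_degree) simp
  qed simp
  ultimately show "max (degree p) (degree q) \<le> degree (p + q)" by simp
qed

lemma sp_props: "nonneg (stern_poly n) \<and> (n > 0 \<longrightarrow> stern_poly n \<noteq> 0)"
proof (induction n rule: less_induct)
  case (less n)
  show ?case
  proof (cases "n \<le> 1")
    case True
    then have "n = 0 \<or> n = 1" by auto
    then show ?thesis
    proof
      assume "n = 0" then show ?thesis by (simp add: nonneg_def sp0)
    next
      assume "n = 1" then show ?thesis by (simp add: nonneg_def sp1 sp1' coeff_1)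
    qed
  next
    case False
    define m where "m = n div 2"
    have m: "m \<ge> 1" "n = 2*m \<or> n = 2*m+1" using False unfolding m_def by linarith+
    from m(2) show ?thesis
    proof
      assume n: "n = 2*m"
      have IH: "nonneg (stern_poly m)" "stern_poly m \<noteq> 0" using less[of m] n m(1) by auto
      have "nonneg ([:0,1:] * stern_poly m)"
        unfolding nonneg_def
      proof
        fix k
        have e: "[:0,1:] * stern_poly m = pCons 0 (stern_poly m)" by simp
        show "coeff ([:0,1:] * stern_poly m) k \<ge> 0"
          unfolding e using IH(1) unfolding nonneg_def by (cases k) auto
      qed
      then show ?thesis using IH n sp_even[OF m(1)] by auto
    next
      assume n: "n = 2*m+1"
      have IH: "nonneg (stern_poly m)" "stern_poly m \<noteq> 0" "nonneg (stern_poly (m+1))"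
        using less[of m] less[of "m+1"] n m(1) by auto
      have "nonneg (stern_poly m + stern_poly (m+1))"
        using IH unfolding nonneg_def by simp
      then show ?thesis using nonneg_add_ne[OF IH(1) IH(3) IH(2)] n sp_odd[OF m(1)] by auto
    qed
  qed
qed

lemma e_even: "m \<ge> 1 \<Longrightarrow> stern_e (2*m) = stern_e m + 1"
proof -
  assume m: "m \<ge> 1"
  have "stern_poly m \<noteq> 0" using sp_props[of m] m by auto
  then show ?thesis unfolding stern_e_def sp_even[OF m]
    by (subst degree_mult_eq) auto
qed

lemma e_odd: "m \<ge> 1 \<Longrightarrow> stern_e (2*m+1) = max (stern_e m) (stern_e (m+1))"
proof -
  assume m: "m \<ge> 1"
  show ?thesis unfolding stern_e_def sp_odd[OF m]
    using degree_add_nonneg sp_props by blast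
qed


lemma e1: "stern_e 1 = 0" unfolding stern_e_def sp1 by simp

lemma main: "(\<forall>i\<le>n. int (nu (n-i)) - int (nu i) \<le> int (stern_e (n+1)))
   \<and> (\<exists>i\<le>n. int (nu (n-i)) - int (nu i) = int (stern_e (n+1)))"
proof (induction n rule: less_induct)
  case (less n)
  consider "n = 0" | m where "n = 2*m+1" | m where "m \<ge> 1" "n = 2*m"
    by (metis One_nat_def add_cancel_left_left less_one linorder_not_le odd_two_times_div_two_succ
        dvd_mult_div_cancel mult_is_0 not_less_eq_eq)
  then show ?case
  proof cases
    case 1
    have "stern_e (Suc 0) = 0" using e1 by simp
    then show ?thesis using 1 by (auto simp: nu0)
  next
    case (2 m)
    have IH: "\<forall>i\<le>m. int (nu (m-i)) - int (nu i) \<le> int (stern_e (m+1))"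
      "\<exists>i\<le>m. int (nu (m-i)) - int (nu i) = int (stern_e (m+1))"
      using less[of m] 2 by auto
    have E: "stern_e (n+1) = stern_e (m+1) + 1"
      using e_even[of "m+1"] 2 by (simp add: algebra_simps)
    have B: "int (nu (n-i)) - int (nu i) \<le> int (stern_e (n+1))" if "i \<le> n" for i
    proof (cases "even i")
      case True
      then obtain b where b: "i = 2*b" by blast
      have bm: "b \<le> m" using that b 2 by simp
      have "n - i = 2*(m-b)+1" using b bm 2 by simp
      then show ?thesis using IH(1) bm E b by (simp add: nu_even nu_odd nu_odd')
    next
      case False
      then obtain b where b: "i = 2*b+1" using oddE by blast
      have bm: "b \<le> m" using that b 2 by simp
      have "n - i = 2*(m-b)" using b bm 2 by simp
      then show ?thesis using IH(1) bm E b by (force simp: nu_even nu_odd nu_odd')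
    qed
    obtain i0 where i0: "i0 \<le> m" "int (nu (m-i0)) - int (nu i0) = int (stern_e (m+1))"
      using IH(2) by blast
    have "n - 2*i0 = 2*(m-i0)+1" using i0 2 by simp
    then have "int (nu (n-2*i0)) - int (nu (2*i0)) = int (stern_e (n+1))"
      using i0 E by (simp add: nu_even nu_odd nu_odd')
    moreover have "2*i0 \<le> n" using i0 2 by simp
    ultimately show ?thesis using B by blast
  next
    case (3 m)
    have IH: "\<forall>i\<le>m. int (nu (m-i)) - int (nu i) \<le> int (stern_e (m+1))"
      "\<exists>i\<le>m. int (nu (m-i)) - int (nu i) = int (stern_e (m+1))"
      "\<forall>i\<le>m-1. int (nu (m-1-i)) - int (nu i) \<le> int (stern_e m)"
      "\<exists>i\<le>m-1. int (nu (m-1-i)) - int (nu i) = int (stern_e m)"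
      using less[of m] less[of "m-1"] 3 by auto
    have E: "stern_e (n+1) = max (stern_e m) (stern_e (m+1))"
      using e_odd[of m] 3 by simp
    have B: "int (nu (n-i)) - int (nu i) \<le> int (stern_e (n+1))" if "i \<le> n" for i
    proof (cases "even i")
      case True
      then obtain b where b: "i = 2*b" by blast
      have bm: "b \<le> m" using that b 3 by simp
      have "n - i = 2*(m-b)" using b bm 3 by simp
      then show ?thesis using IH(1) bm E b by (force simp: nu_even nu_odd nu_odd')
    next
      case False
      then obtain b where b: "i = 2*b+1" using oddE by blast
      have bm: "b \<le> m-1" using that b 3 by simp
      have "n - i = 2*(m-1-b)+1" using b bm 3 by simp
      then show ?thesis using IH(3) bm E b by (force simp: nu_even nu_odd nu_odd')
    qed
    show ?thesis
    proof (cases "stern_e m \<le> stern_e (m+1)")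
      case True
      obtain i0 where i0: "i0 \<le> m" "int (nu (m-i0)) - int (nu i0) = int (stern_e (m+1))"
        using IH(2) by blast
      have "n - 2*i0 = 2*(m-i0)" using i0 3 by simp
      then have "int (nu (n-2*i0)) - int (nu (2*i0)) = int (stern_e (n+1))"
        using i0 E True by (simp add: nu_even nu_odd nu_odd')
      moreover have "2*i0 \<le> n" using i0 3 by simp
      ultimately show ?thesis using B by blast
    next
      case False
      obtain i0 where i0: "i0 \<le> m-1" "int (nu (m-1-i0)) - int (nu i0) = int (stern_e m)"
        using IH(4) by blast
      have "n - (2*i0+1) = 2*(m-1-i0)+1" using i0 3 by simp
      then have "int (nu (n-(2*i0+1))) - int (nu (2*i0+1)) = int (stern_e (n+1))"
        using i0 E False by (simp add: nu_even nu_odd nu_odd')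
      moreover have "2*i0+1 \<le> n" using i0 3 by simp
      ultimately show ?thesis using B by blast
    qed
  qed
qed

theorem corollary3p8:
  fixes n :: nat
  shows "int (stern_e (n + 1)) = Max {int (nu (n - i)) - int (nu i) | i. i \<le> n}
       \<and> - int (stern_e (n + 1)) = Min {int (nu (n - i)) - int (nu i) | i. i \<le> n}"
proof -
  let ?S = "{int (nu (n - i)) - int (nu i) | i. i \<le> n}"
  have fin: "finite ?S" by simp
  from main[of n] have M1: "\<forall>i\<le>n. int (nu (n-i)) - int (nu i) \<le> int (stern_e (n+1))"
    and M2: "\<exists>i\<le>n. int (nu (n-i)) - int (nu i) = int (stern_e (n+1))" by auto
  have "Max ?S = int (stern_e (n+1))"
  proof (rule Max_eqI[OF fin])
    show "y \<le> int (stern_e (n+1))" if "y \<in> ?S" for y using that M1 by auto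
    show "int (stern_e (n+1)) \<in> ?S" using M2 by force
  qed
  moreover have "Min ?S = - int (stern_e (n+1))"
  proof (rule Min_eqI[OF fin])
    fix y assume "y \<in> ?S"
    then obtain i where i: "i \<le> n" "y = int (nu (n - i)) - int (nu i)" by auto
    have "int (nu (n-(n-i))) - int (nu (n-i)) \<le> int (stern_e (n+1))" using M1 by simp
    then show "- int (stern_e (n+1)) \<le> y" using i by simp
  next
    obtain i where i: "i \<le> n" "int (nu (n-i)) - int (nu i) = int (stern_e (n+1))" using M2 by blast
    have "n - (n - i) = i" using i by simp
    then have "int (nu (n-(n-i))) - int (nu (n-i)) = - int (stern_e (n+1))" using i by simp
    moreover have "n - i \<le> n" by simp
    ultimately show "- int (stern_e (n+1)) \<in> ?S"
      by (intro CollectI exI[of _ "n-i"] conjI) simp_all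
  qed
  ultimately show ?thesis by simp
qed

end
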